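(* Let $k$ be a field of characteristic $\neq 2$ and let $\Psi:\mathfrak g_\boxtimes\to\mathfrak g=\mathfrak{sl}_2(k)\otimes_k\mathcal A$ be the Lie algebra homomorphism described in the context. Then $\Psi$ is surjective.
   Context: $\mathcal A=k[t,t^{-1},(1-t)^{-1}]\subset k(t)$, $t'=1-t^{-1}$, $t''=(1-t)^{-1}$. The Tetrahedron algebra $\mathfrak g_\boxtimes$ is the Lie algebra over $k$ with generators $X_{ij}$ ($i,j\in\{0,1,2,3\}$, $i\neq j$) and relations $X_{ij}+X_{ji}=0$ for $i\neq j$; $[X_{ij},X_{jk}]=2(X_{ij}+X_{jk})$ for mutually distinct $i,j,k$; $[X_{hi},[X_{hi},[X_{hi},X_{jk}]]]=4[X_{hi},X_{jk}]$ for mutually distinct $h,i,j,k$. With $x=\begin{pmatrix}-1&2\\0&1\end{pmatrix}$, $y=\begin{pmatrix}-1&0\\-2&1\end{pmatrix}$, $z=\begin{pmatrix}1&0\\0&-1\end{pmatrix}$, $\Psi$ is the Lie algebra homomorphism determined by $\Psi(X_{12})=x\otimes1$, $\Psi(X_{23})=y\otimes 1$, $\Psi(X_{31})=z\otimes 1$, $\Psi(X_{03})=y\otimes t+z\otimes(t-1)$, $\Psi(X_{01})=z\otimes t'+x\otimes(t'-1)$, $\Psi(X_{02})=x\otimes t''+y\otimes(t''-1)$. *)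

theory Defs
  imports "HOL-Computational_Algebra.Polynomial" "HOL-Computational_Algebra.Fraction_Field"
    "Jordan_Normal_Form.Matrix"
begin

text \<open>The rational function field k(t) is modelled as the fraction field of k[t].\<close>

type_synonym 'k ratfun = "'k poly fract"

definition tvar :: "'k::field ratfun" where
  "tvar = Fract [:0, 1:] 1"

definition kconst :: "'k::field \<Rightarrow> 'k ratfun" where
  "kconst c = Fract [:c:] 1"

text \<open>The algebra A = k[t, t^-1, (1-t)^-1] as a subset of k(t).\<close>

definition A_alg :: "'k::field ratfun set" where
  "A_alg = {Fract p ([:0, 1:] ^ m * [:1, -1:] ^ n) | p m n. True}"

text \<open>sl_2(k) tensor A, realised as the traceless 2x2 matrices with entries in A,
  with Lie bracket the commutator; x tensor f corresponds to f * x.\<close>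

definition sl2A :: "'k::field ratfun mat set" where
  "sl2A = {M \<in> carrier_mat 2 2. M $$ (0,0) + M $$ (1,1) = 0 \<and>
             (\<forall>i<2. \<forall>j<2. M $$ (i,j) \<in> A_alg)}"

definition lie_bracket :: "'a::comm_ring mat \<Rightarrow> 'a mat \<Rightarrow> 'a mat" where
  "lie_bracket M N = M * N - N * M"

definition tens :: "'a::comm_ring mat \<Rightarrow> 'a \<Rightarrow> 'a mat" where
  "tens M f = f \<cdot>\<^sub>m M"

inductive_set lie_gen :: "'k::field ratfun mat set \<Rightarrow> 'k ratfun mat set"
  for S :: "'k ratfun mat set" where
  gen: "M \<in> S \<Longrightarrow> M \<in> lie_gen S"
| zero: "0\<^sub>m 2 2 \<in> lie_gen S"
| add: "M \<in> lie_gen S \<Longrightarrow> N \<in> lie_gen S \<Longrightarrow> M + N \<in> lie_gen S"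
| smult: "M \<in> lie_gen S \<Longrightarrow> kconst c \<cdot>\<^sub>m M \<in> lie_gen S"
| bracket: "M \<in> lie_gen S \<Longrightarrow> N \<in> lie_gen S \<Longrightarrow> lie_bracket M N \<in> lie_gen S"

definition xm :: "'k::field ratfun mat" where
  "xm = mat_of_rows_list 2 [[-1, 2], [0, 1]]"
definition ym :: "'k::field ratfun mat" where
  "ym = mat_of_rows_list 2 [[-1, 0], [-2, 1]]"
definition zm :: "'k::field ratfun mat" where
  "zm = mat_of_rows_list 2 [[1, 0], [0, -1]]"

definition tprime :: "'k::field ratfun" where
  "tprime = 1 - inverse tvar"
definition tdprime :: "'k::field ratfun" where
  "tdprime = inverse (1 - tvar)"

text \<open>Images under Psi of the generators X_12, X_23, X_31, X_03, X_01, X_02.\<close>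

definition Psi_gens :: "'k::field ratfun mat set" where
  "Psi_gens = {tens xm 1, tens ym 1, tens zm 1,
               tens ym tvar + tens zm (tvar - 1),
               tens zm tprime + tens xm (tprime - 1),
               tens xm tdprime + tens ym (tdprime - 1)}"

end

theory Submission imports Defs begin

definition mk :: "'a \<Rightarrow> 'a \<Rightarrow> 'a \<Rightarrow> 'a \<Rightarrow> 'a mat" where
  "mk a b c d = mat_of_rows_list 2 [[a,b],[c,d]]"

lemma mk_dim[simp]: "dim_row (mk a b c d) = 2" "dim_col (mk a b c d) = 2"
  "mk a b c d \<in> carrier_mat 2 2"
  by (auto simp: mk_def mat_of_rows_list_def)

lemma less2: "(i::nat) < 2 \<longleftrightarrow> i = 0 \<or> i = 1" by auto

lemma mk_idx[simp]: "mk a b c d $$ (0,0) = a" "mk a b c d $$ (0,1) = b"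
  "mk a b c d $$ (1,0) = c" "mk a b c d $$ (1,1) = d"
  "mk a b c d $$ (0,Suc 0) = b"
  "mk a b c d $$ (Suc 0,0) = c" "mk a b c d $$ (Suc 0,Suc 0) = d"
  by (auto simp: mk_def mat_of_rows_list_def)

lemma mk_eq: "mk a b c d = mk a' b' c' d' \<longleftrightarrow> a = a' \<and> b = b' \<and> c = c' \<and> d = d'"
  apply (rule iffI)
   apply (metis mk_idx)
  by simp

lemma mat_mk: "M \<in> carrier_mat 2 2 \<Longrightarrow> M = mk (M$$(0,0)) (M$$(0,1)) (M$$(1,0)) (M$$(1,1))"
  by (rule eq_matI) (auto simp: less2)

lemma mk_add[simp]: "mk a b c d + mk a' b' c' d' = mk (a+a') (b+b') (c+c') (d+d')"
  by (rule eq_matI) (auto simp: less2)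

lemma mk_minus[simp]: "mk a b c d - mk a' b' c' d' = mk (a-a') (b-b') (c-c') (d-d')"
  by (rule eq_matI) (auto simp: less2)

lemma mk_smult[simp]: "f \<cdot>\<^sub>m mk a b c d = mk (f*a) (f*b) (f*c) (f*d)"
  by (rule eq_matI) (auto simp: less2)

lemma mk_mult[simp]: "mk a b c d * mk a' b' c' d' =
   mk (a*a'+b*c') (a*b'+b*d') (c*a'+d*c') (c*b'+d*d')"
  by (rule eq_matI) (auto simp: less2 scalar_prod_def row_def col_def numeral_2_eq_2 less_Suc_eq)

lemma mk_zero: "0\<^sub>m 2 2 = mk 0 0 0 0"
  by (rule eq_matI) (auto simp: less2)


lemma pCons_split: "pCons a p = [:a:] + [:0,1:] * (p :: 'k::field poly)"
  by (simp add: mult_pCons_left poly_eq_iff coeff_pCons split: nat.split)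

abbreviation TT :: "'k::field poly" where "TT \<equiv> [:0,1:]"
abbreviation UU :: "'k::field poly" where "UU \<equiv> [:1,-1:]"

lemma TU_nz: "(TT::'k::field poly) ^ m * UU ^ n \<noteq> 0"
  by simp

lemma A_mem: "Fract p (TT ^ m * UU ^ n) \<in> (A_alg :: 'k::field ratfun set)"
  unfolding A_alg_def by blast

lemma A_cases: "a \<in> (A_alg :: 'k::field ratfun set) \<Longrightarrow> (\<And>p m n. a = Fract p (TT ^ m * UU ^ n) \<Longrightarrow> P) \<Longrightarrow> P"
  unfolding A_alg_def by blast

lemma A_add: "a \<in> A_alg \<Longrightarrow> b \<in> A_alg \<Longrightarrow> a + b \<in> (A_alg :: 'k::field ratfun set)"
proof -
  assume a: "a \<in> A_alg" and b: "b \<in> A_alg"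
  obtain p m n where pa: "a = Fract p (TT ^ m * UU ^ n)" using a by (rule A_cases)
  obtain p' m' n' where pb: "b = Fract p' (TT ^ m' * UU ^ n')" using b by (rule A_cases)
  have "a + b = Fract (p * (TT ^ m' * UU ^ n') + p' * (TT ^ m * UU ^ n)) (TT ^ (m+m') * UU ^ (n+n'))"
    unfolding pa pb by (simp add: power_add mult_ac)
  then show ?thesis using A_mem by metis
qed

lemma A_mult: "a \<in> A_alg \<Longrightarrow> b \<in> A_alg \<Longrightarrow> a * b \<in> (A_alg :: 'k::field ratfun set)"
proof -
  assume a: "a \<in> A_alg" and b: "b \<in> A_alg"
  obtain p m n where pa: "a = Fract p (TT ^ m * UU ^ n)" using a by (rule A_cases)
  obtain p' m' n' where pb: "b = Fract p' (TT ^ m' * UU ^ n')" using b by (rule A_cases)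
  have "a * b = Fract (p * p') (TT ^ (m+m') * UU ^ (n+n'))"
    unfolding pa pb by (simp add: power_add mult_ac)
  then show ?thesis using A_mem by metis
qed

lemma A_uminus: "a \<in> A_alg \<Longrightarrow> - a \<in> (A_alg :: 'k::field ratfun set)"
proof -
  assume a: "a \<in> A_alg"
  obtain p m n where pa: "a = Fract p (TT ^ m * UU ^ n)" using a by (rule A_cases)
  have "- a = Fract (-p) (TT ^ m * UU ^ n)" unfolding pa by simp
  then show ?thesis using A_mem by metis
qed

lemma A_diff: "a \<in> A_alg \<Longrightarrow> b \<in> A_alg \<Longrightarrow> a - b \<in> (A_alg :: 'k::field ratfun set)"
  using A_add[OF _ A_uminus] by (metis diff_conv_add_uminus)

lemma A_one: "1 \<in> (A_alg :: 'k::field ratfun set)"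
  using A_mem[of 1 0 0] by (simp add: One_fract_def)

lemma A_zero: "0 \<in> (A_alg :: 'k::field ratfun set)"
  using A_mem[of 0 0 0] by (simp add: Zero_fract_def)

lemma A_of_nat: "of_nat k \<in> (A_alg :: 'k::field ratfun set)"
  by (induction k) (auto intro: A_add A_one A_zero)

lemma A_numeral: "numeral k \<in> (A_alg :: 'k::field ratfun set)"
  using A_of_nat by (metis of_nat_numeral)

lemma A_tvar: "tvar \<in> (A_alg :: 'k::field ratfun set)"
  using A_mem[of TT 0 0] by (simp add: tvar_def)

lemma inv_tvar: "inverse tvar = (Fract 1 TT :: 'k::field ratfun)"
  by (simp add: tvar_def)

lemma inv_1mt: "inverse (1 - tvar) = (Fract 1 UU :: 'k::field ratfun)"
proof -
  have "1 - tvar = (Fract UU 1 :: 'k ratfun)"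
    by (simp add: tvar_def One_fract_def pCons_one[symmetric])
  then show ?thesis by simp
qed

lemma A_invt: "inverse tvar \<in> (A_alg :: 'k::field ratfun set)"
  using A_mem[of 1 1 0] by (simp add: inv_tvar)

lemma A_tdprime: "tdprime \<in> (A_alg :: 'k::field ratfun set)"
  using A_mem[of 1 0 1] by (simp add: inv_1mt tdprime_def)

lemma A_tprime: "tprime \<in> (A_alg :: 'k::field ratfun set)"
  unfolding tprime_def by (intro A_diff A_one A_invt)

lemma A_kconst: "kconst c \<in> (A_alg :: 'k::field ratfun set)"
  using A_mem[of "[:c:]" 0 0] by (simp add: kconst_def)

lemmas A_intros = A_add A_mult A_uminus A_diff A_one A_zero A_numeral A_tvar A_invt
  A_tdprime A_tprime A_kconst

lemma sl2A_mk: "a \<in> A_alg \<Longrightarrow> b \<in> A_alg \<Longrightarrow> c \<in> A_alg \<Longrightarrow> d \<in> A_alg \<Longrightarrow> a + d = 0 \<Longrightarrow>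
   mk a b c d \<in> (sl2A :: 'k::field ratfun mat set)"
  unfolding sl2A_def by (auto simp: less2)

lemma sl2A_E: "M \<in> (sl2A :: 'k::field ratfun mat set) \<Longrightarrow>
  (\<And>a b c. a \<in> A_alg \<Longrightarrow> b \<in> A_alg \<Longrightarrow> c \<in> A_alg \<Longrightarrow> M = mk a b c (-a) \<Longrightarrow> P) \<Longrightarrow> P"
proof -
  assume M: "M \<in> sl2A" and r: "(\<And>a b c. a \<in> A_alg \<Longrightarrow> b \<in> A_alg \<Longrightarrow> c \<in> A_alg \<Longrightarrow> M = mk a b c (-a) \<Longrightarrow> P)"
  have c: "M \<in> carrier_mat 2 2" and tr: "M $$ (0,0) + M $$ (1,1) = 0"
    and e: "\<And>i j. i < 2 \<Longrightarrow> j < 2 \<Longrightarrow> M $$ (i,j) \<in> A_alg"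
    using M unfolding sl2A_def by auto
  have "M $$ (1,1) = - M $$ (0,0)" using tr by (simp add: eq_neg_iff_add_eq_0 add.commute)
  then have "M = mk (M$$(0,0)) (M$$(0,1)) (M$$(1,0)) (- M$$(0,0))" using mat_mk[OF c] by simp
  then show P by (rule r[rotated 3]) (auto intro: e)
qed

lemma kconst_mult: "kconst (a*b) = kconst a * (kconst b :: 'k::field ratfun)"
  by (simp add: kconst_def mult.commute)
lemma kconst_add: "kconst (a+b) = kconst a + (kconst b :: 'k::field ratfun)"
  by (simp add: kconst_def)
lemma kconst_one: "kconst 1 = (1 :: 'k::field ratfun)"
  by (simp add: kconst_def One_fract_def pCons_one)
lemma kconst_of_nat: "kconst (of_nat n) = (of_nat n :: 'k::field ratfun)"
  by (simp add: kconst_def of_nat_fract of_nat_poly)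
lemma kconst_numeral: "kconst (numeral n) = (numeral n :: 'k::field ratfun)"
  by (metis kconst_of_nat of_nat_numeral)
lemma kconst_uminus: "kconst (-a) = - (kconst a :: 'k::field ratfun)"
  by (simp add: kconst_def)

lemma xm_mk: "xm = mk (-1) 2 0 1" by (simp add: xm_def mk_def)
lemma ym_mk: "ym = mk (-1) 0 (-2) 1" by (simp add: ym_def mk_def)
lemma zm_mk: "zm = mk 1 0 0 (-1)" by (simp add: zm_def mk_def)

lemma gens_sub: "M \<in> Psi_gens \<Longrightarrow> M \<in> (sl2A :: 'k::field ratfun mat set)"
  unfolding Psi_gens_def tens_def xm_mk ym_mk zm_mk
  by (auto intro!: sl2A_mk A_intros)

lemma lie_gen_sub: "M \<in> lie_gen (Psi_gens :: 'k::field ratfun mat set) \<Longrightarrow> M \<in> sl2A"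
proof (induction rule: lie_gen.induct)
  case (gen M) then show ?case by (rule gens_sub)
next
  case zero then show ?case unfolding mk_zero by (auto intro!: sl2A_mk A_intros)
next
  case (add M N)
  from add.IH(1) obtain a b c where "a \<in> A_alg" "b \<in> A_alg" "c \<in> A_alg" "M = mk a b c (-a)" by (rule sl2A_E)
  moreover from add.IH(2) obtain a' b' c' where "a' \<in> A_alg" "b' \<in> A_alg" "c' \<in> A_alg" "N = mk a' b' c' (-a')" by (rule sl2A_E)
  ultimately show ?case by (auto intro!: sl2A_mk A_intros)
next
  case (smult M c)
  from smult.IH obtain a b d where "a \<in> A_alg" "b \<in> A_alg" "d \<in> A_alg" "M = mk a b d (-a)" by (rule sl2A_E)
  then show ?case by (auto intro!: sl2A_mk A_intros)
next
  case (bracket M N)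
  from bracket.IH(1) obtain a b c where "a \<in> A_alg" "b \<in> A_alg" "c \<in> A_alg" "M = mk a b c (-a)" by (rule sl2A_E)
  moreover from bracket.IH(2) obtain a' b' c' where "a' \<in> A_alg" "b' \<in> A_alg" "c' \<in> A_alg" "N = mk a' b' c' (-a')" by (rule sl2A_E)
  ultimately show ?case unfolding lie_bracket_def by (auto intro!: sl2A_mk A_intros simp: algebra_simps)
qed

lemma fract_pow: "Fract a b ^ n = Fract (a ^ n) (b ^ n :: 'a::idom)"
  by (induction n) (simp_all add: One_fract_def)

context
  fixes dummy :: "'k::field itself"
  assumes two: "(2::'k) \<noteq> 0"
begin

abbreviation LL where "LL \<equiv> lie_gen (Psi_gens :: 'k ratfun mat set)"

definition RR :: "'k ratfun \<Rightarrow> bool" where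
  "RR f \<longleftrightarrow> mk 0 f 0 0 \<in> LL \<and> mk 0 0 f 0 \<in> LL \<and> mk f 0 0 (-f) \<in> LL"

lemma L_cong: "M \<in> LL \<Longrightarrow> M = N \<Longrightarrow> N \<in> LL" by simp

lemma L_add: "M \<in> LL \<Longrightarrow> N \<in> LL \<Longrightarrow> M + N \<in> LL" by (rule lie_gen.add)
lemma L_br: "M \<in> LL \<Longrightarrow> N \<in> LL \<Longrightarrow> lie_bracket M N \<in> LL" by (rule lie_gen.bracket)

lemma L_scale: "mk a b c d \<in> LL \<Longrightarrow> mk (kconst s * a) (kconst s * b) (kconst s * c) (kconst s * d) \<in> LL"
  using lie_gen.smult[of "mk a b c d" Psi_gens s] by simp

lemma L_div: "(s::'k) \<noteq> 0 \<Longrightarrow> mk (kconst s * a) (kconst s * b) (kconst s * c) (kconst s * d) \<in> LL \<Longrightarrow> mk a b c d \<in> LL"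
proof -
  assume s: "s \<noteq> 0" and m: "mk (kconst s * a) (kconst s * b) (kconst s * c) (kconst s * d) \<in> LL"
  have k: "kconst (inverse s) * (kconst s * x) = x" for x :: "'k ratfun"
    using s by (simp add: mult.assoc[symmetric] kconst_mult[symmetric] kconst_one)
  show ?thesis using L_scale[OF m, of "inverse s"] by (simp add: k)
qed

lemma L_divE: "(s::'k) \<noteq> 0 \<Longrightarrow> mk 0 (kconst s * f) 0 0 \<in> LL \<Longrightarrow> mk 0 f 0 0 \<in> LL"
  using L_div[of s 0 f 0 0] by simp
lemma L_divF: "(s::'k) \<noteq> 0 \<Longrightarrow> mk 0 0 (kconst s * f) 0 \<in> LL \<Longrightarrow> mk 0 0 f 0 \<in> LL"
  using L_div[of s 0 0 f 0] by simp

lemma gen_in: "M \<in> Psi_gens \<Longrightarrow> M \<in> LL" by (rule lie_gen.gen)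

lemma H_in: "mk 1 0 0 (-1) \<in> LL"
  proof -
  have "tens zm 1 \<in> LL" by (rule gen_in) (unfold Psi_gens_def, blast)
  then show ?thesis by (simp add: tens_def zm_mk)
qed
lemma X_in: "mk (-1) 2 0 1 \<in> LL"
  proof -
  have "tens xm 1 \<in> LL" by (rule gen_in) (unfold Psi_gens_def, blast)
  then show ?thesis by (simp add: tens_def xm_mk)
qed
lemma Y_in: "mk (-1) 0 (-2) 1 \<in> LL"
  proof -
  have "tens ym 1 \<in> LL" by (rule gen_in) (unfold Psi_gens_def, blast)
  then show ?thesis by (simp add: tens_def ym_mk)
qed

lemma two': "(-2::'k) \<noteq> 0" using two by simp

lemma E_in: "mk 0 1 0 0 \<in> LL"
proof -
  have "mk 0 (kconst 2 * 1) 0 0 \<in> LL"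
    by (rule L_cong[OF L_add[OF X_in H_in]]) (simp add: kconst_numeral)
  then show ?thesis by (rule L_divE[OF two])
qed

lemma F_in: "mk 0 0 1 0 \<in> LL"
proof -
  have "mk 0 0 (kconst (-2) * 1) 0 \<in> LL"
    by (rule L_cong[OF L_add[OF Y_in H_in]]) (simp add: kconst_numeral kconst_uminus)
  then show ?thesis by (rule L_divF[OF two'])
qed

lemma E_to_R: "mk 0 f 0 0 \<in> LL \<Longrightarrow> RR f"
proof -
  assume e: "mk 0 f 0 0 \<in> LL"
  have h: "mk f 0 0 (-f) \<in> LL"
    by (rule L_cong[OF L_br[OF e F_in]]) (simp add: lie_bracket_def)
  have "mk 0 0 (kconst (-2) * f) 0 \<in> LL"
    by (rule L_cong[OF L_br[OF h F_in]]) (simp add: lie_bracket_def kconst_numeral kconst_uminus)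
  then have "mk 0 0 f 0 \<in> LL" by (rule L_divF[OF two'])
  then show ?thesis using e h by (simp add: RR_def)
qed

lemma F_to_R: "mk 0 0 f 0 \<in> LL \<Longrightarrow> RR f"
proof -
  assume e: "mk 0 0 f 0 \<in> LL"
  have h: "mk f 0 0 (-f) \<in> LL"
    by (rule L_cong[OF L_br[OF E_in e]]) (simp add: lie_bracket_def)
  have "mk 0 (kconst 2 * f) 0 0 \<in> LL"
    by (rule L_cong[OF L_br[OF h E_in]]) (simp add: lie_bracket_def kconst_numeral)
  then have "mk 0 f 0 0 \<in> LL" by (rule L_divE[OF two])
  then show ?thesis by (rule E_to_R)
qed

lemma R_mult: "RR f \<Longrightarrow> RR g \<Longrightarrow> RR (f * g)"
proof -
  assume f: "RR f" and g: "RR g"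
  have a: "mk f 0 0 (-f) \<in> LL" "mk 0 g 0 0 \<in> LL" using f g unfolding RR_def by auto
  have "mk 0 (kconst 2 * (f * g)) 0 0 \<in> LL"
    by (rule L_cong[OF L_br[OF a]]) (simp add: lie_bracket_def kconst_numeral)
  then show ?thesis by (rule E_to_R[OF L_divE[OF two]])
qed

lemma R_add: "RR f \<Longrightarrow> RR g \<Longrightarrow> RR (f + g)"
proof -
  assume f: "RR f" and g: "RR g"
  have a: "mk 0 f 0 0 \<in> LL" "mk 0 g 0 0 \<in> LL" using f g unfolding RR_def by auto
  have "mk 0 (f + g) 0 0 \<in> LL"
    by (rule L_cong[OF L_add[OF a]]) auto
  then show ?thesis by (rule E_to_R)
qed

lemma R_kc: "RR f \<Longrightarrow> RR (kconst c * f)"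
proof -
  assume "RR f"
  then have "mk 0 f 0 0 \<in> LL" by (simp add: RR_def)
  from L_scale[OF this, of c] have "mk 0 (kconst c * f) 0 0 \<in> LL" by simp
  then show ?thesis by (rule E_to_R)
qed

lemma R_one: "RR 1"
  by (rule E_to_R[OF E_in])

lemma R_const: "RR (kconst c)"
  using R_kc[OF R_one, of c] by simp

lemma R_t: "RR tvar"
proof -
  have g: "tens ym tvar + tens zm (tvar - 1) \<in> LL" by (rule gen_in) (unfold Psi_gens_def, blast)
  have "mk 0 0 (kconst (-2) * tvar) 0 \<in> LL"
    by (rule L_cong[OF L_add[OF g H_in]]) (simp add: tens_def ym_mk zm_mk kconst_numeral kconst_uminus algebra_simps)
  then show ?thesis by (rule F_to_R[OF L_divF[OF two']])
qed

lemma R_invt: "RR (inverse tvar)"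
proof -
  have g: "tens zm tprime + tens xm (tprime - 1) \<in> LL" by (rule gen_in) (unfold Psi_gens_def, blast)
  have h: "mk (kconst (-1) * 1) (kconst (-1) * 0) (kconst (-1) * 0) (kconst (-1) * (-1)) \<in> LL"
    by (rule L_scale[OF H_in])
  have "mk 0 (kconst (-2) * inverse tvar) 0 0 \<in> LL"
    by (rule L_cong[OF L_add[OF g h]]) (simp add: tens_def xm_mk zm_mk kconst_numeral kconst_uminus kconst_one tprime_def algebra_simps)
  then show ?thesis by (rule E_to_R[OF L_divE[OF two']])
qed

lemma R_tdp: "RR tdprime"
proof -
  define G where "G = tens xm (tdprime :: 'k ratfun) + tens ym (tdprime - 1)"
  have g: "G \<in> LL" unfolding G_def by (rule gen_in) (unfold Psi_gens_def, blast)
  have x1: "lie_bracket (mk 1 0 0 (-1)) G \<in> LL" by (rule L_br[OF H_in g])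
  have x2: "lie_bracket (mk 1 0 0 (-1)) (lie_bracket (mk 1 0 0 (-1)) G) \<in> LL" by (rule L_br[OF H_in x1])
  have x1': "kconst 2 \<cdot>\<^sub>m lie_bracket (mk 1 0 0 (-1)) G \<in> LL" by (rule lie_gen.smult[OF x1])
  have "mk 0 (kconst 16 * tdprime) 0 0 \<in> LL"
    by (rule L_cong[OF L_add[OF x1' x2]]) (simp add: G_def lie_bracket_def tens_def xm_mk ym_mk kconst_numeral algebra_simps)
  moreover have "(16::'k) \<noteq> 0"
  proof -
    have "(16::'k) = 2 * 2 * 2 * 2" by simp
    then show ?thesis using no_zero_divisors[OF no_zero_divisors[OF no_zero_divisors[OF two two] two] two] by simp
  qed
  ultimately show ?thesis using E_to_R L_divE by blast
qed

lemma R_poly: "RR (Fract p 1)"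
proof (induction p)
  case 0
  then show ?case using R_kc[OF R_one, of 0] by (simp add: kconst_def Zero_fract_def)
next
  case (pCons a p)
  have "Fract (pCons a p) 1 = kconst a + tvar * Fract p 1"
    by (subst pCons_split) (simp add: kconst_def tvar_def)
  then show ?case using R_add[OF R_const R_mult[OF R_t pCons.IH]] by simp
qed

lemma R_pow: "RR f \<Longrightarrow> RR (f ^ n)"
  by (induction n) (auto intro: R_one R_mult)

lemma R_A: "a \<in> A_alg \<Longrightarrow> RR a"
proof -
  assume a: "a \<in> A_alg"
  obtain p m n where pa: "a = Fract p (TT ^ m * UU ^ n)" using a by (rule A_cases)
  have "a = Fract p 1 * (inverse tvar) ^ m * tdprime ^ n"
    unfolding pa inv_tvar tdprime_def inv_1mt fract_pow by simp
  then show ?thesis using R_mult[OF R_mult[OF R_poly R_pow[OF R_invt]] R_pow[OF R_tdp]] by simp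
qed

lemma sup_sl2: "M \<in> sl2A \<Longrightarrow> M \<in> LL"
proof -
  assume "M \<in> sl2A"
  then obtain a b c where abc: "a \<in> A_alg" "b \<in> A_alg" "c \<in> A_alg" "M = mk a b c (-a)" by (rule sl2A_E)
  have "mk a 0 0 (-a) + mk 0 b 0 0 + mk 0 0 c 0 \<in> LL"
    using R_A[OF abc(1)] R_A[OF abc(2)] R_A[OF abc(3)] unfolding RR_def
    by (intro L_add) auto
  then show ?thesis using abc(4) by simp
qed

end

theorem corollary1p3:
  fixes dummy :: "'k::field itself"
  assumes "(2::'k) \<noteq> 0"
  shows "lie_gen (Psi_gens :: 'k ratfun mat set) = sl2A"
  using lie_gen_sub sup_sl2[OF assms] by blast

end
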